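(* Let $\mu_1,\mu_2$, $P_{n,m}$, the nearest neighbor recurrence coefficients $a_{n,m},b_{n,m},c_{n,m},d_{n,m}$ and the marginal recurrence coefficients $a_n^2(\mu_i),b_n(\mu_i)$ be as in the context, and suppose $c_{n,m}\neq d_{n,m}$ for all $n,m\ge 0$. Then the nearest neighbor recurrence coefficients can be computed recursively (by induction on $n+m$) from the relations \begin{align*} d_{n+1,m}-d_{n,m} &= c_{n,m+1}-c_{n,m}, && n,m\ge0,\\ a_{n+1,m}+b_{n+1,m}-(a_{n,m+1}+b_{n,m+1}) &= d_{n+1,m}c_{n,m}-d_{n,m}c_{n,m+1}, && n,m\ge 0,\\ \frac{a_{n,m+1}}{a_{n,m}} &= \frac{c_{n,m}-d_{n,m}}{c_{n-1,m}-d_{n-1,m}}, && n\ge1,\ m\ge0,\\ \frac{b_{n+1,m}}{b_{n,m}} &= \frac{c_{n,m}-d_{n,m}}{c_{n,m-1}-d_{n,m-1}}, && n\ge0,\ m\ge1, \end{align*} together with the boundary conditions $a_{n,0}=a_n^2(\mu_1)$, $b_{n,0}=0$, $c_{n,0}=b_n(\mu_1)$ for $n\ge0$ and $a_{0,m}=0$, $b_{0,m}=a_m^2(\mu_2)$, $d_{0,m}=b_m(\mu_2)$ for $m\ge0$; that is, these relations and boundary conditions determine all $a_{n,m},b_{n,m},c_{n,m},d_{n,m}$ ($n,m\ge0$) uniquely.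
   Context: Let $\mu_1,\mu_2$ be positive Borel measures on $\mathbb{R}$ with all moments finite, forming a normal system: for every $(n,m)\in\mathbb{N}^2$ there is a unique monic polynomial $P_{n,m}$ of degree $n+m$ with $\int x^kP_{n,m}\,d\mu_1=0$ for $0\le k\le n-1$ and $\int x^kP_{n,m}\,d\mu_2=0$ for $0\le k\le m-1$. Set $P_{n,m}=0$ if $n<0$ or $m<0$. The nearest neighbor recurrence coefficients are defined by \[ xP_{n,m}=P_{n+1,m}+c_{n,m}P_{n,m}+a_{n,m}P_{n-1,m}+b_{n,m}P_{n,m-1},\qquad xP_{n,m}=P_{n,m+1}+d_{n,m}P_{n,m}+a_{n,m}P_{n-1,m}+b_{n,m}P_{n,m-1}, \] with the convention $a_{0,m}=0$ and $b_{n,0}=0$ for the coefficients multiplying zero polynomials. For $i=1,2$, $P_n(x;\mu_i)$ are the monic orthogonal polynomials for $\mu_i$, satisfying $xP_n(x;\mu_i)=P_{n+1}(x;\mu_i)+b_n(\mu_i)P_n(x;\mu_i)+a_n^2(\mu_i)P_{n-1}(x;\mu_i)$ for $n\ge0$, with $P_0=1$, $P_{-1}=0$ and $a_0^2(\mu_i)=0$. (Thus $P_{n,0}=P_n(\cdot;\mu_1)$ and $P_{0,m}=P_m(\cdot;\mu_2)$.) The four displayed relations in the claim are known to hold for the nearest neighbor recurrence coefficients. *)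

theory Defs
  imports "HOL-Analysis.Analysis" "HOL-Computational_Algebra.Polynomial"
begin

definition orth_upto :: "real measure \<Rightarrow> nat \<Rightarrow> real poly \<Rightarrow> bool" where
  "orth_upto \<mu> n p \<longleftrightarrow> (\<forall>k<n. (\<integral>x. x ^ k * poly p x \<partial>\<mu>) = 0)"

definition mop_cond :: "real measure \<Rightarrow> real measure \<Rightarrow> nat \<Rightarrow> nat \<Rightarrow> real poly \<Rightarrow> bool" where
  "mop_cond \<mu>1 \<mu>2 n m p \<longleftrightarrow>
     lead_coeff p = 1 \<and> degree p = n + m \<and> orth_upto \<mu>1 n p \<and> orth_upto \<mu>2 m p"

definition normal_system :: "real measure \<Rightarrow> real measure \<Rightarrow> bool" where
  "normal_system \<mu>1 \<mu>2 \<longleftrightarrow> (\<forall>n m. \<exists>!p. mop_cond \<mu>1 \<mu>2 n m p)"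

definition MOP :: "real measure \<Rightarrow> real measure \<Rightarrow> nat \<Rightarrow> nat \<Rightarrow> real poly" where
  "MOP \<mu>1 \<mu>2 n m = (THE p. mop_cond \<mu>1 \<mu>2 n m p)"

definition OP :: "real measure \<Rightarrow> nat \<Rightarrow> real poly" where
  "OP \<mu> n = (THE p. lead_coeff p = 1 \<and> degree p = n \<and> orth_upto \<mu> n p)"

definition NN_relations ::
  "(nat \<Rightarrow> nat \<Rightarrow> real) \<Rightarrow> (nat \<Rightarrow> nat \<Rightarrow> real) \<Rightarrow> (nat \<Rightarrow> nat \<Rightarrow> real) \<Rightarrow> (nat \<Rightarrow> nat \<Rightarrow> real) \<Rightarrow> bool" where
  "NN_relations a b c d \<longleftrightarrow>
     (\<forall>n m. d (n+1) m - d n m = c n (m+1) - c n m) \<and>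
     (\<forall>n m. a (n+1) m + b (n+1) m - (a n (m+1) + b n (m+1))
            = d (n+1) m * c n m - d n m * c n (m+1)) \<and>
     (\<forall>n m. n \<ge> 1 \<longrightarrow>
            a n (m+1) / a n m = (c n m - d n m) / (c (n-1) m - d (n-1) m)) \<and>
     (\<forall>n m. m \<ge> 1 \<longrightarrow>
            b (n+1) m / b n m = (c n m - d n m) / (c n (m-1) - d n (m-1)))"

(* boundary conditions; al_i n = a_n^2(mu_i), be_i n = b_n(mu_i) *)
definition NN_boundary ::
  "(nat \<Rightarrow> real) \<Rightarrow> (nat \<Rightarrow> real) \<Rightarrow> (nat \<Rightarrow> real) \<Rightarrow> (nat \<Rightarrow> real) \<Rightarrow>
   (nat \<Rightarrow> nat \<Rightarrow> real) \<Rightarrow> (nat \<Rightarrow> nat \<Rightarrow> real) \<Rightarrow> (nat \<Rightarrow> nat \<Rightarrow> real) \<Rightarrow> (nat \<Rightarrow> nat \<Rightarrow> real) \<Rightarrow> bool" where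
  "NN_boundary al1 be1 al2 be2 a b c d \<longleftrightarrow>
     (\<forall>n. a n 0 = al1 n \<and> b n 0 = 0 \<and> c n 0 = be1 n) \<and>
     (\<forall>m. a 0 m = 0 \<and> b 0 m = al2 m \<and> d 0 m = be2 m)"

end

theory Submission
  imports Defs
begin


lemma cmp_lemma:
  fixes P Q R A :: "real poly"
  assumes "lead_coeff P = 1" "degree P = n" "Q = (if n = 0 then 0 else R)"
    "n > 0 \<Longrightarrow> lead_coeff R = 1 \<and> degree R = n - 1"
    "A + smult c P + smult a Q = A + smult c' P + smult a' Q"
  shows "c = c' \<and> (n > 0 \<longrightarrow> a = a')"
proof -
  have e: "smult c P + smult a Q = smult c' P + smult a' Q"
    using assms(5) by (simp add: add.assoc)
  have cQ: "coeff Q n = 0"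
  proof (cases "n = 0")
    case True thus ?thesis using assms(3) by simp
  next
    case False thus ?thesis using assms(3,4) by (simp add: coeff_eq_0)
  qed
  have "coeff (smult c P + smult a Q) n = coeff (smult c' P + smult a' Q) n" using e by simp
  hence cc: "c = c'" using cQ assms(1,2) by simp
  moreover have "n > 0 \<longrightarrow> a = a'"
  proof
    assume n: "n > 0"
    have "smult a Q = smult a' Q" using e cc by simp
    hence "coeff (smult a R) (n-1) = coeff (smult a' R) (n-1)" using n assms(3) by simp
    thus "a = a'" using assms(4)[OF n] by auto
  qed
  ultimately show ?thesis by blast
qed

lemma solve2:
  fixes X Y X' Y' c d :: real
  assumes "X' - Y' = X - Y" "c * X' - d * Y' = c * X - d * Y" "c \<noteq> d"
  shows "X' = X \<and> Y' = Y"
proof -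
  have "Y' - Y = X' - X" using assms(1) by simp
  have "c * X' - d * Y' - (c * X - d * Y) = (c - d) * (X' - X) - d * ((Y' - Y) - (X' - X))"
    by (simp add: algebra_simps)
  hence "(c - d) * (X' - X) = 0" using assms(2) \<open>Y' - Y = X' - X\<close> by simp
  hence "X' = X" using assms(3) by simp
  thus ?thesis using assms(1) by simp
qed

lemma uniq_lemma:
  fixes a b c d a' b' c' d' :: "nat \<Rightarrow> nat \<Rightarrow> real"
  assumes R: "NN_relations a b c d" and R': "NN_relations a' b' c' d'"
    and B1: "\<forall>n. a' n 0 = a n 0 \<and> b' n 0 = b n 0 \<and> c' n 0 = c n 0"
    and B2: "\<forall>m. a' 0 m = a 0 m \<and> b' 0 m = b 0 m \<and> d' 0 m = d 0 m"
    and cd: "\<forall>n m. c n m \<noteq> d n m"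
  shows "a' = a \<and> b' = b \<and> c' = c \<and> d' = d"
proof -
  from R have r1: "\<And>n m. d (n+1) m - d n m = c n (m+1) - c n m"
    and r2: "\<And>n m. a (n+1) m + b (n+1) m - (a n (m+1) + b n (m+1))
            = d (n+1) m * c n m - d n m * c n (m+1)"
    and r3: "\<And>n m. n \<ge> 1 \<Longrightarrow> a n (m+1) / a n m = (c n m - d n m) / (c (n-1) m - d (n-1) m)"
    and r4: "\<And>n m. m \<ge> 1 \<Longrightarrow> b (n+1) m / b n m = (c n m - d n m) / (c n (m-1) - d n (m-1))"
    unfolding NN_relations_def by blast+
  from R' have r1': "\<And>n m. d' (n+1) m - d' n m = c' n (m+1) - c' n m"
    and r2': "\<And>n m. a' (n+1) m + b' (n+1) m - (a' n (m+1) + b' n (m+1))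
            = d' (n+1) m * c' n m - d' n m * c' n (m+1)"
    and r3': "\<And>n m. n \<ge> 1 \<Longrightarrow> a' n (m+1) / a' n m = (c' n m - d' n m) / (c' (n-1) m - d' (n-1) m)"
    and r4': "\<And>n m. m \<ge> 1 \<Longrightarrow> b' (n+1) m / b' n m = (c' n m - d' n m) / (c' n (m-1) - d' n (m-1))"
    unfolding NN_relations_def by blast+
  have cd': "\<And>n m. c n m - d n m \<noteq> 0" using cd by simp
  have anz: "a n m \<noteq> 0" if "n \<ge> 1" for n m
  proof
    assume "a n m = 0"
    hence "(c n m - d n m) / (c (n-1) m - d (n-1) m) = 0" using r3[OF that, of m] by simp
    thus False using cd' by simp
  qed
  have bnz: "b n m \<noteq> 0" if "m \<ge> 1" for n m
  proof
    assume "b n m = 0"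
    hence "(c n m - d n m) / (c n (m-1) - d n (m-1)) = 0" using r4[OF that, of n] by simp
    thus False using cd' by simp
  qed
  have a3: "a n (m+1) = a n m * ((c n m - d n m) / (c (n-1) m - d (n-1) m))" if "n \<ge> 1" for n m
    using r3[OF that, of m] anz[OF that, of m] by (simp add: field_simps)
  have b4: "b (n+1) m = b n m * ((c n m - d n m) / (c n (m-1) - d n (m-1)))" if "m \<ge> 1" for n m
    using r4[OF that, of n] bnz[OF that, of n] by (simp add: field_simps)
  have main: "\<forall>n m. n + m = N \<longrightarrow> a' n m = a n m \<and> b' n m = b n m \<and> c' n m = c n m \<and> d' n m = d n m" for N
  proof (induction N rule: less_induct)
    case (less N)
    have IH: "a' n m = a n m \<and> b' n m = b n m \<and> c' n m = c n m \<and> d' n m = d n m" if "n + m < N" for n m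
      using less that by blast
    have A: "a' n m = a n m" if "n + m = N" for n m
    proof (cases "n = 0 \<or> m = 0")
      case True thus ?thesis using B1 B2 by auto
    next
      case False
      then obtain k where k: "m = k + 1" and n: "n \<ge> 1" by (metis Suc_eq_plus1 not0_implies_Suc less_one not_less)
      have i1: "a' n k = a n k \<and> c' n k = c n k \<and> d' n k = d n k" using IH[of n k] that k by simp
      have i2: "c' (n-1) k = c (n-1) k \<and> d' (n-1) k = d (n-1) k" using IH[of "n-1" k] that k n by simp
      have "a' n (k+1) = a' n k * ((c' n k - d' n k) / (c' (n-1) k - d' (n-1) k))"
        using r3'[OF n, of k] anz[OF n, of k] i1 by (simp add: field_simps)
      also have "\<dots> = a n (k+1)" using a3[OF n, of k] i1 i2 by simp
      finally show ?thesis using k by simp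
    qed
    have Bq: "b' n m = b n m" if "n + m = N" for n m
    proof (cases "n = 0 \<or> m = 0")
      case True thus ?thesis using B1 B2 by auto
    next
      case False
      then obtain j where j: "n = j + 1" and m: "m \<ge> 1" by (metis Suc_eq_plus1 not0_implies_Suc less_one not_less)
      have i1: "b' j m = b j m \<and> c' j m = c j m \<and> d' j m = d j m" using IH[of j m] that j by simp
      have i2: "c' j (m-1) = c j (m-1) \<and> d' j (m-1) = d j (m-1)" using IH[of j "m-1"] that j m by simp
      have "b' (j+1) m = b' j m * ((c' j m - d' j m) / (c' j (m-1) - d' j (m-1)))"
        using r4'[OF m, of j] bnz[OF m, of j] i1 by (simp add: field_simps)
      also have "\<dots> = b (j+1) m" using b4[OF m, of j] i1 i2 by simp
      finally show ?thesis using j by simp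
    qed
    have CD: "d' (n+1) m = d (n+1) m \<and> c' n (m+1) = c n (m+1)" if "n + m + 1 = N" for n m
    proof (rule solve2[where c = "c n m" and d = "d n m"])
      have i: "c' n m = c n m \<and> d' n m = d n m" using IH[of n m] that by simp
      show "d' (n+1) m - c' n (m+1) = d (n+1) m - c n (m+1)"
        using r1[of n m] r1'[of n m] i by simp
      have ab: "a' (n+1) m = a (n+1) m" "b' (n+1) m = b (n+1) m"
        "a' n (m+1) = a n (m+1)" "b' n (m+1) = b n (m+1)"
        using A[of "n+1" m] A[of n "m+1"] Bq[of "n+1" m] Bq[of n "m+1"] that by simp_all
      show "c n m * d' (n+1) m - d n m * c' n (m+1) = c n m * d (n+1) m - d n m * c n (m+1)"
        using r2[of n m] r2'[of n m] i ab by (simp add: mult.commute)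
      show "c n m \<noteq> d n m" using cd by simp
    qed
    show ?case
    proof (intro allI impI conjI)
      fix n m assume nm: "n + m = N"
      show "a' n m = a n m" using A nm .
      show "b' n m = b n m" using Bq nm .
      show "c' n m = c n m"
      proof (cases m)
        case 0 thus ?thesis using B1 by simp
      next
        case (Suc k) thus ?thesis using CD[of n k] nm by simp
      qed
      show "d' n m = d n m"
      proof (cases n)
        case 0 thus ?thesis using B2 by simp
      next
        case (Suc j) thus ?thesis using CD[of j m] nm by simp
      qed
    qed
  qed
  show ?thesis using main by (intro conjI ext) blast+
qed

lemma OP_MOP1:
  assumes "normal_system \<mu>1 \<mu>2"
  shows "OP \<mu>1 n = MOP \<mu>1 \<mu>2 n 0 \<and> mop_cond \<mu>1 \<mu>2 n 0 (MOP \<mu>1 \<mu>2 n 0)"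
proof -
  have ex: "\<exists>!p. mop_cond \<mu>1 \<mu>2 n 0 p" using assms unfolding normal_system_def by blast
  have M: "mop_cond \<mu>1 \<mu>2 n 0 (MOP \<mu>1 \<mu>2 n 0)" unfolding MOP_def by (rule theI'[OF ex])
  have "OP \<mu>1 n = MOP \<mu>1 \<mu>2 n 0" unfolding OP_def
  proof (rule the_equality)
    show "lead_coeff (MOP \<mu>1 \<mu>2 n 0) = 1 \<and> degree (MOP \<mu>1 \<mu>2 n 0) = n \<and> orth_upto \<mu>1 n (MOP \<mu>1 \<mu>2 n 0)"
      using M unfolding mop_cond_def by auto
  next
    fix p assume "lead_coeff p = 1 \<and> degree p = n \<and> orth_upto \<mu>1 n p"
    moreover have "orth_upto \<mu>2 0 p" by (simp add: orth_upto_def)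
    ultimately have "mop_cond \<mu>1 \<mu>2 n 0 p" unfolding mop_cond_def add_0_right add_0_left by blast
    thus "p = MOP \<mu>1 \<mu>2 n 0" using ex M by blast
  qed
  thus ?thesis using M by simp
qed

lemma OP_MOP2:
  assumes "normal_system \<mu>1 \<mu>2"
  shows "OP \<mu>2 m = MOP \<mu>1 \<mu>2 0 m \<and> mop_cond \<mu>1 \<mu>2 0 m (MOP \<mu>1 \<mu>2 0 m)"
proof -
  have ex: "\<exists>!p. mop_cond \<mu>1 \<mu>2 0 m p" using assms unfolding normal_system_def by blast
  have M: "mop_cond \<mu>1 \<mu>2 0 m (MOP \<mu>1 \<mu>2 0 m)" unfolding MOP_def by (rule theI'[OF ex])
  have "OP \<mu>2 m = MOP \<mu>1 \<mu>2 0 m" unfolding OP_def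
  proof (rule the_equality)
    show "lead_coeff (MOP \<mu>1 \<mu>2 0 m) = 1 \<and> degree (MOP \<mu>1 \<mu>2 0 m) = m \<and> orth_upto \<mu>2 m (MOP \<mu>1 \<mu>2 0 m)"
      using M unfolding mop_cond_def by auto
  next
    fix p assume "lead_coeff p = 1 \<and> degree p = m \<and> orth_upto \<mu>2 m p"
    moreover have "orth_upto \<mu>1 0 p" by (simp add: orth_upto_def)
    ultimately have "mop_cond \<mu>1 \<mu>2 0 m p" unfolding mop_cond_def add_0_right add_0_left by blast
    thus "p = MOP \<mu>1 \<mu>2 0 m" using ex M by blast
  qed
  thus ?thesis using M by simp
qed

theorem theorem3p1:
  fixes \<mu>1 \<mu>2 :: "real measure"
    and a b c d :: "nat \<Rightarrow> nat \<Rightarrow> real"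
    and al1 be1 al2 be2 :: "nat \<Rightarrow> real"
  assumes borel1: "sets \<mu>1 = sets borel" and borel2: "sets \<mu>2 = sets borel"
    and moments1: "\<forall>k. integrable \<mu>1 (\<lambda>x. x ^ k)"
    and moments2: "\<forall>k. integrable \<mu>2 (\<lambda>x. x ^ k)"
    and normal: "normal_system \<mu>1 \<mu>2"
    and rec1: "\<forall>n m. [:0, 1:] * MOP \<mu>1 \<mu>2 n m =
                 MOP \<mu>1 \<mu>2 (n+1) m + smult (c n m) (MOP \<mu>1 \<mu>2 n m)
                 + smult (a n m) (if n = 0 then 0 else MOP \<mu>1 \<mu>2 (n-1) m)
                 + smult (b n m) (if m = 0 then 0 else MOP \<mu>1 \<mu>2 n (m-1))"
    and rec2: "\<forall>n m. [:0, 1:] * MOP \<mu>1 \<mu>2 n m =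
                 MOP \<mu>1 \<mu>2 n (m+1) + smult (d n m) (MOP \<mu>1 \<mu>2 n m)
                 + smult (a n m) (if n = 0 then 0 else MOP \<mu>1 \<mu>2 (n-1) m)
                 + smult (b n m) (if m = 0 then 0 else MOP \<mu>1 \<mu>2 n (m-1))"
    and conv_a: "\<forall>m. a 0 m = 0" and conv_b: "\<forall>n. b n 0 = 0"
    and marg1: "\<forall>n. [:0, 1:] * OP \<mu>1 n = OP \<mu>1 (n+1) + smult (be1 n) (OP \<mu>1 n)
                 + smult (al1 n) (if n = 0 then 0 else OP \<mu>1 (n-1))"
    and marg1_0: "al1 0 = 0"
    and marg2: "\<forall>n. [:0, 1:] * OP \<mu>2 n = OP \<mu>2 (n+1) + smult (be2 n) (OP \<mu>2 n)
                 + smult (al2 n) (if n = 0 then 0 else OP \<mu>2 (n-1))"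
    and marg2_0: "al2 0 = 0"
    and known: "NN_relations a b c d"
    and cd: "\<forall>n m. c n m \<noteq> d n m"
  shows "NN_boundary al1 be1 al2 be2 a b c d \<and>
         (\<forall>a' b' c' d'. NN_relations a' b' c' d' \<and> NN_boundary al1 be1 al2 be2 a' b' c' d'
            \<longrightarrow> a' = a \<and> b' = b \<and> c' = c \<and> d' = d)"
  proof -
  have bd1: "a n 0 = al1 n \<and> c n 0 = be1 n" for n
  proof -
    have O: "\<And>k. OP \<mu>1 k = MOP \<mu>1 \<mu>2 k 0 \<and> mop_cond \<mu>1 \<mu>2 k 0 (MOP \<mu>1 \<mu>2 k 0)"
      using OP_MOP1[OF normal] by blast
    have e1: "[:0, 1:] * MOP \<mu>1 \<mu>2 n 0 = MOP \<mu>1 \<mu>2 (n+1) 0 + smult (c n 0) (MOP \<mu>1 \<mu>2 n 0)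
                 + smult (a n 0) (if n = 0 then 0 else MOP \<mu>1 \<mu>2 (n-1) 0)"
      using rec1 by simp
    have e2: "[:0, 1:] * MOP \<mu>1 \<mu>2 n 0 = MOP \<mu>1 \<mu>2 (n+1) 0 + smult (be1 n) (MOP \<mu>1 \<mu>2 n 0)
                 + smult (al1 n) (if n = 0 then 0 else MOP \<mu>1 \<mu>2 (n-1) 0)"
    proof -
      have "(if n = 0 then 0 else OP \<mu>1 (n-1)) = (if n = 0 then 0 else MOP \<mu>1 \<mu>2 (n-1) 0)"
        using O by simp
      have O1: "\<And>k. OP \<mu>1 k = MOP \<mu>1 \<mu>2 k 0" using O by blast
      show ?thesis using marg1[rule_format, of n] unfolding O1 by simp
    qed
    have r: "c n 0 = be1 n \<and> (n > 0 \<longrightarrow> a n 0 = al1 n)"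
    proof (rule cmp_lemma[where P="MOP \<mu>1 \<mu>2 n 0" and n=n and R="MOP \<mu>1 \<mu>2 (n-1) 0"
          and A="MOP \<mu>1 \<mu>2 (n+1) 0"])
      show "lead_coeff (MOP \<mu>1 \<mu>2 n 0) = 1" "degree (MOP \<mu>1 \<mu>2 n 0) = n"
        using O[of n] unfolding mop_cond_def add_0_right add_0_left by blast+
      show "0 < n \<Longrightarrow> lead_coeff (MOP \<mu>1 \<mu>2 (n-1) 0) = 1 \<and> degree (MOP \<mu>1 \<mu>2 (n-1) 0) = n - 1"
        using O[of "n-1"] unfolding mop_cond_def add_0_right add_0_left by blast
    qed (use e1 e2 in auto)
    thus ?thesis using conv_a marg1_0 by (cases n) auto
  qed
  have bd2: "b 0 m = al2 m \<and> d 0 m = be2 m" for m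
  proof -
    have O: "\<And>k. OP \<mu>2 k = MOP \<mu>1 \<mu>2 0 k \<and> mop_cond \<mu>1 \<mu>2 0 k (MOP \<mu>1 \<mu>2 0 k)"
      using OP_MOP2[OF normal] by blast
    have e1: "[:0, 1:] * MOP \<mu>1 \<mu>2 0 m = MOP \<mu>1 \<mu>2 0 (m+1) + smult (d 0 m) (MOP \<mu>1 \<mu>2 0 m)
                 + smult (b 0 m) (if m = 0 then 0 else MOP \<mu>1 \<mu>2 0 (m-1))"
      using rec2 by simp
    have e2: "[:0, 1:] * MOP \<mu>1 \<mu>2 0 m = MOP \<mu>1 \<mu>2 0 (m+1) + smult (be2 m) (MOP \<mu>1 \<mu>2 0 m)
                 + smult (al2 m) (if m = 0 then 0 else MOP \<mu>1 \<mu>2 0 (m-1))"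
    proof -
      have "(if m = 0 then 0 else OP \<mu>2 (m-1)) = (if m = 0 then 0 else MOP \<mu>1 \<mu>2 0 (m-1))"
        using O by simp
      have O1: "\<And>k. OP \<mu>2 k = MOP \<mu>1 \<mu>2 0 k" using O by blast
      show ?thesis using marg2[rule_format, of m] unfolding O1 by simp
    qed
    have r: "d 0 m = be2 m \<and> (m > 0 \<longrightarrow> b 0 m = al2 m)"
    proof (rule cmp_lemma[where P="MOP \<mu>1 \<mu>2 0 m" and n=m and R="MOP \<mu>1 \<mu>2 0 (m-1)"
          and A="MOP \<mu>1 \<mu>2 0 (m+1)"])
      show "lead_coeff (MOP \<mu>1 \<mu>2 0 m) = 1" "degree (MOP \<mu>1 \<mu>2 0 m) = m"
        using O[of m] unfolding mop_cond_def add_0_right add_0_left by blast+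
      show "0 < m \<Longrightarrow> lead_coeff (MOP \<mu>1 \<mu>2 0 (m-1)) = 1 \<and> degree (MOP \<mu>1 \<mu>2 0 (m-1)) = m - 1"
        using O[of "m-1"] unfolding mop_cond_def add_0_right add_0_left by blast
    qed (use e1 e2 in auto)
    thus ?thesis using conv_b marg2_0 by (cases m) auto
  qed
  have BD: "NN_boundary al1 be1 al2 be2 a b c d"
    unfolding NN_boundary_def using bd1 bd2 conv_a conv_b by simp
  show ?thesis
  proof (rule conjI[OF BD], intro allI impI)
    fix a' b' c' d' assume H: "NN_relations a' b' c' d' \<and> NN_boundary al1 be1 al2 be2 a' b' c' d'"
    show "a' = a \<and> b' = b \<and> c' = c \<and> d' = d"
    proof (rule uniq_lemma[OF known])
      show "NN_relations a' b' c' d'" using H by simp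
      show "\<forall>n. a' n 0 = a n 0 \<and> b' n 0 = b n 0 \<and> c' n 0 = c n 0"
        using H BD unfolding NN_boundary_def by simp
      show "\<forall>m. a' 0 m = a 0 m \<and> b' 0 m = b 0 m \<and> d' 0 m = d 0 m"
        using H BD unfolding NN_boundary_def by simp
      show "\<forall>n m. c n m \<noteq> d n m" by (rule cd)
    qed
  qed
qed

end
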